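(* Let $X$ be a $T_0$ space. If the Smyth power space $P_S(X)$ is first-countable, then $X$ is first-countable.
   Context: The specialization order of $X$ is $x\le y$ iff $x\in\overline{\{y\}}$; saturated sets are upper sets in this order. $\mathsf{K}(X)$ is the set of nonempty compact saturated subsets of $X$. For open $U\subseteq X$, $\Box U=\{K\in\mathsf{K}(X):K\subseteq U\}$; the Smyth power space $P_S(X)$ is $\mathsf{K}(X)$ with the topology having base $\{\Box U: U\text{ open}\}$. *)

theory Defs
  imports "HOL-Analysis.Analysis"
begin

definition spec_le :: "'a topology \<Rightarrow> 'a \<Rightarrow> 'a \<Rightarrow> bool" where
  "spec_le X x y \<longleftrightarrow> x \<in> X closure_of {y}"

definition saturated_in :: "'a topology \<Rightarrow> 'a set \<Rightarrow> bool" where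
  "saturated_in X A \<longleftrightarrow> A \<subseteq> topspace X \<and>
     (\<forall>x\<in>A. \<forall>y\<in>topspace X. spec_le X x y \<longrightarrow> y \<in> A)"

definition Ksat :: "'a topology \<Rightarrow> 'a set set" where
  "Ksat X = {K. K \<noteq> {} \<and> compactin X K \<and> saturated_in X K}"

definition smyth_box :: "'a topology \<Rightarrow> 'a set \<Rightarrow> 'a set set" where
  "smyth_box X U = {K \<in> Ksat X. K \<subseteq> U}"

definition smyth_power :: "'a topology \<Rightarrow> 'a set topology" where
  "smyth_power X = topology_generated_by {smyth_box X U | U. openin X U}"

end

theory Submission
  imports Defs
begin

definition upc :: "'a topology \<Rightarrow> 'a \<Rightarrow> 'a set" where
  "upc X x = {y \<in> topspace X. x \<in> X closure_of {y}}"

lemma upc_sub_open: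
  assumes "openin X W" "x \<in> W" shows "upc X x \<subseteq> W"
  using assms unfolding upc_def by (auto simp: in_closure_of)

lemma upc_self: "x \<in> topspace X \<Longrightarrow> x \<in> upc X x"
  unfolding upc_def by (auto simp: in_closure_of)

lemma upc_Ksat:
  assumes "x \<in> topspace X" shows "upc X x \<in> Ksat X"
proof -
  have ne: "upc X x \<noteq> {}" using upc_self[OF assms] by auto
  have c: "compactin X (upc X x)"
    unfolding compactin_def
  proof (intro conjI allI impI)
    show "upc X x \<subseteq> topspace X" unfolding upc_def by auto
  next
    fix \<U> assume h: "(\<forall>U\<in>\<U>. openin X U) \<and> upc X x \<subseteq> \<Union>\<U>"
    have "x \<in> \<Union>\<U>" using h upc_self[OF assms] by (meson subsetD)
    then obtain W where W: "W \<in> \<U>" "x \<in> W" by (meson UnionE)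
    have "openin X W" using h W(1) by blast
    then have "upc X x \<subseteq> W" using W(2) by (rule upc_sub_open)
    then show "\<exists>\<F>. finite \<F> \<and> \<F> \<subseteq> \<U> \<and> upc X x \<subseteq> \<Union>\<F>"
      using W by (intro exI[of _ "{W}"]) auto
  qed
  have s: "saturated_in X (upc X x)"
    unfolding saturated_in_def spec_le_def
  proof (intro conjI ballI impI)
    show "upc X x \<subseteq> topspace X" unfolding upc_def by auto
  next
    fix y z assume y: "y \<in> upc X x" and z: "z \<in> topspace X" and yz: "y \<in> X closure_of {z}"
    have "X closure_of {y} \<subseteq> X closure_of {z}"
    proof -
      have "X closure_of {y} \<subseteq> X closure_of (X closure_of {z})"
        by (rule closure_of_mono) (use yz in simp)
      then show ?thesis by (simp only: closure_of_closure_of)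
    qed
    then show "z \<in> upc X x" using y z unfolding upc_def by auto
  qed
  show ?thesis by (simp add: Ksat_def ne c s)
qed

lemma gen_box:
  assumes "generate_topology_on {smyth_box X U | U. openin X U} B" "K \<in> B"
  shows "\<exists>U. openin X U \<and> K \<subseteq> U \<and> smyth_box X U \<subseteq> B"
  using assms
proof (induction arbitrary: K rule: generate_topology_on.induct)
  case Empty then show ?case by simp
next
  case (Int a b)
  have ka: "K \<in> a" and kb: "K \<in> b" using Int.prems by auto
  obtain U where U: "openin X U" "K \<subseteq> U" "smyth_box X U \<subseteq> a"
    using Int.IH(1)[OF ka] by blast
  obtain V where V: "openin X V" "K \<subseteq> V" "smyth_box X V \<subseteq> b"
    using Int.IH(2)[OF kb] by blast
  have "openin X (U \<inter> V)" using U(1) V(1) by (rule openin_Int)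
  moreover have "smyth_box X (U \<inter> V) \<subseteq> a \<inter> b"
    using U(3) V(3) unfolding smyth_box_def by blast
  ultimately show ?case using U(2) V(2) by blast
next
  case (UN \<K>)
  then obtain k where k: "k \<in> \<K>" "K \<in> k" by blast
  obtain U where "openin X U" "K \<subseteq> U" "smyth_box X U \<subseteq> k"
    using UN.IH[OF k] by blast
  then show ?case using k(1) by blast
next
  case (Basis s)
  obtain U where U: "s = smyth_box X U" "openin X U" using Basis.hyps by blast
  have "K \<subseteq> U" using Basis.prems U(1) unfolding smyth_box_def by blast
  then show ?case using U by blast
qed

theorem mainTheorem6:
  fixes X :: "'a topology"
  assumes "t0_space X"
    and "first_countable (smyth_power X)"
  shows "first_countable X"
  unfolding first_countable_def
proof
  fix x assume x: "x \<in> topspace X"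
  have boxopen: "openin (smyth_power X) (smyth_box X W)" if "openin X W" for W
    unfolding smyth_power_def openin_topology_generated_by_iff
    by (rule generate_topology_on.Basis) (use that in blast)
  have ut: "upc X x \<in> topspace (smyth_power X)"
  proof -
    have "upc X x \<subseteq> topspace X" by (auto simp: upc_def)
    then have "upc X x \<in> smyth_box X (topspace X)"
      by (simp add: smyth_box_def upc_Ksat[OF x])
    then show ?thesis using openin_subset[OF boxopen[OF openin_topspace]] by blast
  qed
  have "\<exists>\<B>. countable \<B> \<and> (\<forall>V\<in>\<B>. openin (smyth_power X) V) \<and>
     (\<forall>U. openin (smyth_power X) U \<and> upc X x \<in> U \<longrightarrow> (\<exists>V\<in>\<B>. upc X x \<in> V \<and> V \<subseteq> U))"
    using assms(2) ut unfolding first_countable_def by (rule bspec)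
  then obtain \<B> where B: "countable \<B>" "\<forall>V\<in>\<B>. openin (smyth_power X) V"
    "\<forall>U. openin (smyth_power X) U \<and> upc X x \<in> U \<longrightarrow> (\<exists>V\<in>\<B>. upc X x \<in> V \<and> V \<subseteq> U)"
    by blast
  define Uf where "Uf V = (SOME U. openin X U \<and> upc X x \<subseteq> U \<and> smyth_box X U \<subseteq> V)" for V
  have Uf: "openin X (Uf V) \<and> upc X x \<subseteq> Uf V \<and> smyth_box X (Uf V) \<subseteq> V"
    if "V \<in> \<B>" "upc X x \<in> V" for V
  proof -
    have "generate_topology_on {smyth_box X U | U. openin X U} V"
      using B(2) that unfolding smyth_power_def openin_topology_generated_by_iff by blast
    from gen_box[OF this that(2)] show ?thesis unfolding Uf_def by (rule someI_ex)
  qed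
  show "\<exists>\<B>. countable \<B> \<and> (\<forall>V\<in>\<B>. openin X V) \<and>
           (\<forall>U. openin X U \<and> x \<in> U \<longrightarrow> (\<exists>V\<in>\<B>. x \<in> V \<and> V \<subseteq> U))"
  proof (intro exI[of _ "Uf ` {V \<in> \<B>. upc X x \<in> V}"] conjI ballI allI impI)
    show "countable (Uf ` {V \<in> \<B>. upc X x \<in> V})" using B(1) by auto
  next
    fix V assume "V \<in> Uf ` {V \<in> \<B>. upc X x \<in> V}"
    then show "openin X V" using Uf by auto
  next
    fix W assume W: "openin X W \<and> x \<in> W"
    have "upc X x \<in> smyth_box X W"
      using upc_Ksat[OF x] upc_sub_open[of X W x] W unfolding smyth_box_def by auto
    then obtain V where V: "V \<in> \<B>" "upc X x \<in> V" "V \<subseteq> smyth_box X W"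
      using B(3) boxopen W by blast
    have "Uf V \<subseteq> W"
    proof
      fix y assume y: "y \<in> Uf V"
      have yt: "y \<in> topspace X" using y Uf[OF V(1,2)] openin_subset by blast
      have "upc X y \<in> smyth_box X (Uf V)"
        using upc_Ksat[OF yt] upc_sub_open[of X "Uf V" y] Uf[OF V(1,2)] y unfolding smyth_box_def by auto
      then have "upc X y \<subseteq> W" using Uf[OF V(1,2)] V(3) unfolding smyth_box_def by auto
      then show "y \<in> W" using upc_self[OF yt] by auto
    qed
    moreover have "x \<in> Uf V" using Uf[OF V(1,2)] upc_self[OF x] by auto
    ultimately show "\<exists>V\<in>Uf ` {V \<in> \<B>. upc X x \<in> V}. x \<in> V \<and> V \<subseteq> W"
      using V by blast
  qed
qed

end
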